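(* The map $$\mathcal S: L^2([0,1])\times\big(Z\cap\mathscr S(\mathbb R)\big)\to Y,\qquad (f,\phi)\mapsto \sum_{k\in\mathbb Z}\hat f(k)\,\big(\mathcal S_\phi e^{2\pi i k\cdot}\big)(b,\xi),$$ where $f=\sum_{k}\hat f(k)e^{2\pi i k t}$ and $(\mathcal S_\phi e^{2\pi i k\cdot})(b,\xi)=e^{2\pi i b(k-\xi)}\,\overline{\hat\phi\big(\tfrac{k-\xi}{\xi}\big)}$ for $b\in\mathbb R$, $\xi\neq 0$, is well defined and continuous (with respect to the $L^2([0,1])$ norm, the norm $\|\cdot\|_Z$ and the norm $\|\cdot\|_Y$).
   Context: The Fourier transform on $\mathbb R$ is $\hat\phi(\xi)=(2\pi)^{-1/2}\int_{\mathbb R}e^{-2\pi i t\xi}\phi(t)\,dt$ (extended to tempered distributions), and for $f\in L^2([0,1])$ (1-periodic), $\hat f(k)=\int_0^1 f(t)e^{-2\pi i k t}dt$. $Z$ is the Hilbert space of admissible windows: $Z=\{\phi\in\mathscr S'(\mathbb R): \int_{\mathbb R}|\hat\phi(\xi)|^2\frac{d\xi}{|1+\xi|}<\infty\}$ with inner product $(\phi,\phi')_Z=\int\hat\phi(\xi)\overline{\hat{\phi'}(\xi)}\frac{d\xi}{|1+\xi|}$. $Y$ is the Hilbert space of functions $g(b,\xi)=\sum_{k\in\mathbb Z}c_k(\xi)e^{2\pi i(k-\xi)b}$ with $c_k\in L^2(\mathbb R,\frac{d\xi}{|\xi|})$ and $\sum_k\|c_k\|^2_{L^2(\mathbb R,d\xi/|\xi|)}<\infty$,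 with inner product $(g,g')_Y=\int_0^1\int_{\mathbb R}g(b,\xi)\overline{g'(b,\xi)}\frac{d\xi}{|\xi|}\,db$ and norm $\|g\|_Y=(\sum_k\|c_k\|^2_{L^2(\mathbb R,d\xi/|\xi|)})^{1/2}$. *)

theory Defs
  imports "HOL-Analysis.Analysis"
begin

definition fourier_coeff :: "(real \<Rightarrow> complex) \<Rightarrow> int \<Rightarrow> complex" where
  "fourier_coeff f k = set_lebesgue_integral lborel {0..1} (\<lambda>t. f t * cis (- 2 * pi * real_of_int k * t))"

definition FT :: "(real \<Rightarrow> complex) \<Rightarrow> real \<Rightarrow> complex" where
  "FT \<phi> \<xi> = (integral\<^sup>L lborel (\<lambda>t. cis (- 2 * pi * t * \<xi>) * \<phi> t)) / complex_of_real (sqrt (2 * pi))"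

definition schwartz :: "(real \<Rightarrow> complex) \<Rightarrow> bool" where
  "schwartz \<phi> \<longleftrightarrow> (\<exists>D :: nat \<Rightarrow> real \<Rightarrow> complex. D 0 = \<phi> \<and>
      (\<forall>n x. (D n has_vector_derivative D (Suc n) x) (at x)) \<and>
      (\<forall>m n. \<exists>C. \<forall>x. \<bar>x\<bar> ^ m * cmod (D n x) \<le> C))"

definition L2_01 :: "(real \<Rightarrow> complex) \<Rightarrow> bool" where
  "L2_01 f \<longleftrightarrow> f \<in> borel_measurable lborel \<and>
     (\<integral>\<^sup>+ t\<in>{0..1}. ennreal ((cmod (f t))\<^sup>2) \<partial>lborel) < \<infinity>"

definition L2_dist :: "(real \<Rightarrow> complex) \<Rightarrow> (real \<Rightarrow> complex) \<Rightarrow> real" where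
  "L2_dist f g = sqrt (enn2real (\<integral>\<^sup>+ t\<in>{0..1}. ennreal ((cmod (f t - g t))\<^sup>2) \<partial>lborel))"

text \<open>The window space Z (restricted to Schwartz functions, where the
  Fourier transform is a genuine function).\<close>
definition Z_sq :: "(real \<Rightarrow> complex) \<Rightarrow> ennreal" where
  "Z_sq \<phi> = (\<integral>\<^sup>+ \<xi>. ennreal ((cmod (FT \<phi> \<xi>))\<^sup>2 / \<bar>1 + \<xi>\<bar>) \<partial>lborel)"

definition in_Z :: "(real \<Rightarrow> complex) \<Rightarrow> bool" where
  "in_Z \<phi> \<longleftrightarrow> Z_sq \<phi> < \<infinity>"

definition Z_dist :: "(real \<Rightarrow> complex) \<Rightarrow> (real \<Rightarrow> complex) \<Rightarrow> real" where
  "Z_dist \<phi> \<psi> = sqrt (enn2real (\<integral>\<^sup>+ \<xi>. ennreal ((cmod (FT \<phi> \<xi> - FT \<psi> \<xi>))\<^sup>2 / \<bar>1 + \<xi>\<bar>) \<partial>lborel))"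

text \<open>Elements of Y, g(b,\<xi>) = sum_k c_k(\<xi>) e^{2\<pi>i(k-\<xi>)b}, are represented by their
  coefficient families c :: int => real => complex; the Y-norm is
  (sum_k ||c_k||^2_{L^2(d\<xi>/|\<xi>|)})^{1/2}.\<close>
definition Y_sq :: "(int \<Rightarrow> real \<Rightarrow> complex) \<Rightarrow> ennreal" where
  "Y_sq c = (\<Sum>\<^sub>\<infinity> k\<in>UNIV. (\<integral>\<^sup>+ \<xi>. ennreal ((cmod (c k \<xi>))\<^sup>2 / \<bar>\<xi>\<bar>) \<partial>lborel))"

definition in_Y :: "(int \<Rightarrow> real \<Rightarrow> complex) \<Rightarrow> bool" where
  "in_Y c \<longleftrightarrow> (\<forall>k. c k \<in> borel_measurable lborel) \<and> Y_sq c < \<infinity>"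

definition Y_dist :: "(int \<Rightarrow> real \<Rightarrow> complex) \<Rightarrow> (int \<Rightarrow> real \<Rightarrow> complex) \<Rightarrow> real" where
  "Y_dist c d = sqrt (enn2real (Y_sq (\<lambda>k \<xi>. c k \<xi> - d k \<xi>)))"

text \<open>The Y-element that the map S assigns to (f,\<phi>): its k-th coefficient is
  fhat(k) * conj(phihat((k-\<xi>)/\<xi>)), i.e.
  S(f,\<phi>)(b,\<xi>) = sum_k fhat(k) e^{2\<pi>ib(k-\<xi>)} conj(phihat((k-\<xi>)/\<xi>)).\<close>
definition S_coeffs :: "(real \<Rightarrow> complex) \<Rightarrow> (real \<Rightarrow> complex) \<Rightarrow> int \<Rightarrow> real \<Rightarrow> complex" where
  "S_coeffs f \<phi> k \<xi> = fourier_coeff f k * cnj (FT \<phi> ((real_of_int k - \<xi>) / \<xi>))"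

end

theory Submission
  imports Defs "HOL-Probability.Sinc_Integral"
begin

lemma infsum_ennreal_cmult:
  "infsum (\<lambda>k. c * f k) A = (c::ennreal) * infsum f A"
proof -
  have "infsum (\<lambda>k. c * f k) A = (SUP F\<in>{F. finite F \<and> F\<subseteq>A}. sum (\<lambda>k. c * f k) F)"
    by (rule nonneg_infsum_complete) simp
  also have "\<dots> = (SUP F\<in>{F. finite F \<and> F\<subseteq>A}. c * sum f F)"
    by (simp add: sum_distrib_left)
  also have "\<dots> = c * (SUP F\<in>{F. finite F \<and> F\<subseteq>A}. sum f F)"
    by (simp add: SUP_mult_left_ennreal)
  also have "(SUP F\<in>{F. finite F \<and> F\<subseteq>A}. sum f F) = infsum f A"
    by (rule nonneg_infsum_complete[symmetric]) simp
  finally show ?thesis .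
qed

lemma infsum_ennreal_mono:
  "(\<And>k. k \<in> A \<Longrightarrow> f k \<le> g k) \<Longrightarrow> infsum f A \<le> (infsum g A :: ennreal)"
  by (rule infsum_mono) (auto intro: nonneg_summable_on_complete)

lemma infsum_ennreal_add:
  "infsum (\<lambda>k. f k + g k) A = infsum f A + (infsum g A :: ennreal)"
  by (rule infsum_add) (auto intro: nonneg_summable_on_complete)

lemma schwartz_cont:
  assumes "schwartz \<phi>" shows "continuous_on UNIV \<phi>"
proof -
  obtain D where D: "D 0 = \<phi>" "\<And>n x. (D n has_vector_derivative D (Suc n) x) (at x)"
    using assms unfolding schwartz_def by blast
  show ?thesis unfolding D(1)[symmetric]
    by (metis D(2) continuous_at_imp_continuous_on has_vector_derivative_continuous)
qed

lemma schwartz_integrable: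
  assumes "schwartz \<phi>" shows "integrable lborel \<phi>"
proof -
  obtain D where D: "D 0 = \<phi>" and Dd: "\<And>n x. (D n has_vector_derivative D (Suc n) x) (at x)" and B: "\<forall>m n. \<exists>C. \<forall>x. \<bar>x\<bar> ^ m * cmod (D n x) \<le> C"
    using assms unfolding schwartz_def by blast
  obtain C0 where C0: "\<And>x. cmod (\<phi> x) \<le> C0" using B[rule_format, of 0 0] D by auto
  obtain C2 where C2: "\<And>x. \<bar>x\<bar>^2 * cmod (\<phi> x) \<le> C2" using B[rule_format, of 2 0] D by auto
  have int: "integrable lborel (\<lambda>x::real. inverse (1 + x^2))"
    using integrable_inverse_1_plus_square by (simp add: set_integrable_def)
  have i2: "integrable lborel (\<lambda>x::real. (C0 + C2) * inverse (1 + x^2))"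
    using int by simp
  show ?thesis
  proof (rule Bochner_Integration.integrable_bound[OF i2])
    show "\<phi> \<in> borel_measurable lborel"
      using schwartz_cont[OF assms] by (simp add: borel_measurable_continuous_onI)
    show "AE x in lborel. norm (\<phi> x) \<le> norm ((C0 + C2) * inverse (1 + x^2))"
    proof (rule AE_I2)
      fix x :: real
      have p: "1 + x^2 > 0" by (simp add: add_pos_nonneg)
      have "(1 + x^2) * cmod (\<phi> x) \<le> C0 + C2" using C0[of x] C2[of x]
        by (simp add: algebra_simps)
      hence "cmod (\<phi> x) \<le> (C0 + C2) * inverse (1 + x^2)" using p
        by (simp add: field_simps)
      moreover have "0 \<le> C0 + C2" using C0[of x] C2[of x] 
        by (smt (verit, best) norm_ge_zero zero_le_mult_iff zero_le_power2 power2_abs)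
      ultimately show "norm (\<phi> x) \<le> norm ((C0 + C2) * inverse (1 + x^2))" using p by simp
    qed
  qed
qed

lemma FT_cont:
  assumes "schwartz \<phi>" shows "continuous_on UNIV (FT \<phi>)"
proof -
  have int: "integrable lborel \<phi>" by (rule schwartz_integrable[OF assms])
  have meas[measurable]: "\<phi> \<in> borel_measurable lborel" using int by auto
  have cm[measurable]: "(\<lambda>t. cis (- 2 * pi * t * c)) \<in> borel_measurable borel" for c
    by (intro borel_measurable_continuous_onI continuous_intros)
  have "isCont (\<lambda>\<xi>. LINT t|lborel. cis (- 2 * pi * t * \<xi>) * \<phi> t) \<xi>0" for \<xi>0
    unfolding continuous_at_sequentially comp_def
  proof (intro allI impI)
    fix X :: "nat \<Rightarrow> real" assume X: "X \<longlonglongrightarrow> \<xi>0"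
    show "(\<lambda>n. LINT t|lborel. cis (- 2 * pi * t * X n) * \<phi> t) \<longlonglongrightarrow>
          (LINT t|lborel. cis (- 2 * pi * t * \<xi>0) * \<phi> t)"
    proof (rule integral_dominated_convergence[where w = "\<lambda>t. norm (\<phi> t)"])
      show "(\<lambda>t. cis (- 2 * pi * t * \<xi>0) * \<phi> t) \<in> borel_measurable lborel"
        using meas by measurable
      show "(\<lambda>t. cis (- 2 * pi * t * X n) * \<phi> t) \<in> borel_measurable lborel" for n
        using meas by measurable
      show "integrable lborel (\<lambda>t. norm (\<phi> t))" using int by auto
      show "AE t in lborel. (\<lambda>n. cis (- 2 * pi * t * X n) * \<phi> t) \<longlonglongrightarrow> cis (- 2 * pi * t * \<xi>0) * \<phi> t"
        by (intro AE_I2 tendsto_intros X)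
      show "AE t in lborel. norm (cis (- 2 * pi * t * X n) * \<phi> t) \<le> norm (\<phi> t)" for n
        by (simp add: norm_mult)
    qed
  qed
  then show ?thesis unfolding FT_def
    by (intro continuous_at_imp_continuous_on ballI continuous_intros) auto
qed

lemma vanish_at_sing:
  fixes F :: "real \<Rightarrow> complex"
  assumes cont: "isCont F (-1)"
    and fin: "(\<integral>\<^sup>+\<xi>. ennreal ((cmod (F \<xi>))\<^sup>2 / \<bar>1 + \<xi>\<bar>) \<partial>lborel) < \<infinity>"
  shows "F (-1) = 0"
proof (rule ccontr)
  assume ne: "F (-1) \<noteq> 0"
  define c where "c = (cmod (F (-1)))\<^sup>2"
  have cpos: "c > 0" using ne by (simp add: c_def)
  have ic: "isCont (\<lambda>\<xi>. (cmod (F \<xi>))\<^sup>2) (-1)" using cont by (intro continuous_intros)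
  then obtain r0 where r0: "r0 > 0" and
    hr: "\<And>\<xi>. dist \<xi> (-1) < r0 \<Longrightarrow> dist ((cmod (F \<xi>))\<^sup>2) c < c/2"
  proof -
    assume h: "\<And>r0. \<lbrakk>r0 > 0; \<And>\<xi>. dist \<xi> (-1) < r0 \<Longrightarrow> dist ((cmod (F \<xi>))\<^sup>2) c < c/2\<rbrakk> \<Longrightarrow> thesis"
    from ic have "\<forall>\<epsilon>>0. \<exists>\<delta>>0. \<forall>x'. dist x' (-1) < \<delta> \<longrightarrow> dist ((cmod (F x'))\<^sup>2) c < \<epsilon>"
      unfolding continuous_at_eps_delta c_def .
    then obtain d where "d > 0" "\<forall>x'. dist x' (-1) < d \<longrightarrow> dist ((cmod (F x'))\<^sup>2) c < c/2"
      using cpos by (meson half_gt_zero)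
    then show thesis using h by blast
  qed
  define r where "r = r0 / 2"
  have r: "r > 0" "r < r0" using r0 by (auto simp: r_def)
  define V where "V = enn2real (\<integral>\<^sup>+\<xi>. ennreal ((cmod (F \<xi>))\<^sup>2 / \<bar>1 + \<xi>\<bar>) \<partial>lborel)"
  have V0: "V \<ge> 0" by (simp add: V_def)
  have Veq: "(\<integral>\<^sup>+\<xi>. ennreal ((cmod (F \<xi>))\<^sup>2 / \<bar>1 + \<xi>\<bar>) \<partial>lborel) = ennreal V"
    using fin by (simp add: V_def ennreal_enn2real_if)
  define M where "M = 2 * (V + 1) / c"
  have M0: "M > 0" using V0 cpos by (simp add: M_def)
  define e where "e = r * exp (- M)"
  have e: "e > 0" "e < r" using r M0 by (auto simp: e_def)
  define a where "a = -1 + e"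
  define b where "b = -1 + r"
  have ab: "a \<le> b" using e by (simp add: a_def b_def)
  have hasint: "((\<lambda>\<xi>. (c/2) / (1 + \<xi>)) has_integral ((c/2) * ln (1 + b) - (c/2) * ln (1 + a))) {a..b}"
  proof -
    have "((\<lambda>\<xi>. (c/2) * ln (1 + \<xi>)) has_real_derivative (c/2) / (1 + \<xi>)) (at \<xi> within {a..b})"
      if "\<xi> \<in> {a..b}" for \<xi>
    proof -
      have "1 + \<xi> > 0" using that e by (simp add: a_def)
      then show ?thesis
        by (auto intro!: derivative_eq_intros simp: field_simps)
    qed
    then show ?thesis
      using fundamental_theorem_of_calculus[OF ab, of "\<lambda>\<xi>. (c/2) * ln (1 + \<xi>)"]
      by (simp add: has_real_derivative_iff_has_vector_derivative)
  qed
  have val: "(c/2) * ln (1 + b) - (c/2) * ln (1 + a) = (c/2) * M"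
  proof -
    have "ln (1 + a) = ln r - M" using r by (simp add: a_def e_def ln_mult)
    moreover have "1 + b = r" by (simp add: b_def)
    ultimately show ?thesis by (simp add: algebra_simps) (metis distrib_left mult.commute)
  qed
  have "(\<integral>\<^sup>+\<xi>. ennreal ((c/2) / (1 + \<xi>)) * indicator {a..b} \<xi> \<partial>lborel) = ennreal ((c/2) * ln (1 + b) - (c/2) * ln (1 + a))"
  proof (rule nn_integral_has_integral_lebesgue'[OF _ hasint])
    fix \<xi> assume "\<xi> \<in> {a..b}"
    then have "1 + \<xi> > 0" using e by (simp add: a_def)
    then show "0 \<le> (c/2) / (1 + \<xi>)" using cpos by simp
  qed
  then have "ennreal ((c/2) * M) = (\<integral>\<^sup>+\<xi>. ennreal ((c/2) / (1 + \<xi>)) * indicator {a..b} \<xi> \<partial>lborel)"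
    unfolding val[symmetric] by (rule sym)
  also have "\<dots> \<le> (\<integral>\<^sup>+\<xi>. ennreal ((cmod (F \<xi>))\<^sup>2 / \<bar>1 + \<xi>\<bar>) \<partial>lborel)"
  proof (rule nn_integral_mono)
    fix \<xi> :: real
    show "ennreal ((c/2) / (1 + \<xi>)) * indicator {a..b} \<xi> \<le> ennreal ((cmod (F \<xi>))\<^sup>2 / \<bar>1 + \<xi>\<bar>)"
    proof (cases "\<xi> \<in> {a..b}")
      case True
      then have p: "1 + \<xi> > 0" and d: "dist \<xi> (-1) < r0"
        using e r by (auto simp: a_def b_def dist_real_def)
      from hr[OF d] have "c/2 \<le> (cmod (F \<xi>))\<^sup>2" unfolding dist_real_def by linarith
      then have "(c/2) / (1 + \<xi>) \<le> (cmod (F \<xi>))\<^sup>2 / (1 + \<xi>)"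
        using p by (intro divide_right_mono) auto
      then have "(c/2) / (1 + \<xi>) \<le> (cmod (F \<xi>))\<^sup>2 / \<bar>1 + \<xi>\<bar>"
        using p by (simp only: abs_of_pos)
      then show ?thesis using True by simp
    qed simp
  qed
  also have "\<dots> = ennreal V" by (rule Veq)
  finally have "(c/2) * M \<le> V" using V0 by simp
  moreover have "(c/2) * M = V + 1" using cpos by (simp add: M_def)
  ultimately show False by simp
qed

lemma ennreal_times_ind: "ennreal (a * indicator A x) = ennreal a * indicator A x"
  by (simp add: indicator_def)

lemma trunc_SUP:
  fixes f :: "real \<Rightarrow> real"
  assumes "f u \<ge> 0"
  shows "(SUP n. ennreal (min (f u) (real n) * indicator (cball 0 (real n)) u)) = ennreal (f u)"
proof (rule antisym)
  show "(SUP n. ennreal (min (f u) (real n) * indicator (cball 0 (real n)) u)) \<le> ennreal (f u)"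
    using assms by (intro SUP_least) (auto simp: indicator_def)
  obtain n :: nat where n: "real n \<ge> max (f u) \<bar>u\<bar>" using real_arch_simple by blast
  have "ennreal (f u) = ennreal (min (f u) (real n) * indicator (cball 0 (real n)) u)"
    using n by (auto simp: indicator_def)
  also have "\<dots> \<le> (SUP n. ennreal (min (f u) (real n) * indicator (cball 0 (real n)) u))"
    by (rule SUP_upper) simp
  finally show "ennreal (f u) \<le> (SUP n. ennreal (min (f u) (real n) * indicator (cball 0 (real n)) u))" .
qed

lemma nn_cov:
  fixes f g g' :: "real \<Rightarrow> real"
  assumes S[measurable]: "S \<in> sets borel" and gS[measurable]: "g ` S \<in> sets borel"
    and der: "\<And>x. x \<in> S \<Longrightarrow> (g has_real_derivative g' x) (at x)"
    and inj: "inj_on g S"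
    and f[measurable]: "f \<in> borel_measurable borel" and fpos: "\<And>u. f u \<ge> 0"
    and gm[measurable]: "g \<in> borel_measurable borel" and g'm[measurable]: "g' \<in> borel_measurable borel"
  shows "(\<integral>\<^sup>+x. ennreal (\<bar>g' x\<bar> * f (g x)) * indicator S x \<partial>lborel) =
         (\<integral>\<^sup>+u. ennreal (f u) * indicator (g ` S) u \<partial>lborel)"
proof -
  define fn where "fn n u = min (f u) (real n) * indicator (cball 0 (real n)) u" for n :: nat and u
  have fnm[measurable]: "fn n \<in> borel_measurable borel" for n
    unfolding fn_def by (intro borel_measurable_times borel_measurable_min f borel_measurable_const borel_measurable_indicator) simp
  have fnpos: "fn n u \<ge> 0" for n u using fpos by (simp add: fn_def)
  have eqn: "(\<integral>\<^sup>+x. ennreal (\<bar>g' x\<bar> * fn n (g x)) * indicator S x \<partial>lborel) =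
         (\<integral>\<^sup>+u. ennreal (fn n u) * indicator (g ` S) u \<partial>lborel)" for n
  proof -
    have "(\<integral>\<^sup>+u. ennreal (fn n u) * indicator (g ` S) u \<partial>lborel) \<le>
          (\<integral>\<^sup>+u. ennreal (real n) * indicator (cball (0::real) (real n)) u \<partial>lborel)"
      apply (rule nn_integral_mono) 
      using fpos by (auto simp: fn_def indicator_def)
    also have "\<dots> = ennreal (real n) * emeasure lborel (cball (0::real) (real n))"
      by (simp add: nn_integral_cmult_indicator)
    also have "\<dots> < \<infinity>"
      using emeasure_lborel_cball_finite[of "0::real" "real n"] by (simp add: ennreal_mult_less_top)
    finally have fin: "(\<integral>\<^sup>+u. ennreal (fn n u * indicator (g ` S) u) \<partial>lborel) < \<infinity>"
      by (simp add: ennreal_times_ind)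
    define r where "r = enn2real (\<integral>\<^sup>+u. ennreal (fn n u * indicator (g ` S) u) \<partial>lborel)"
    have r0: "r \<ge> 0" by (simp add: r_def)
    have req: "(\<integral>\<^sup>+u. ennreal (fn n u * indicator (g ` S) u) \<partial>lborel) = ennreal r"
      using fin by (simp add: r_def ennreal_enn2real_if)
    have "((\<lambda>u. fn n u * indicator (g ` S) u) has_integral r) UNIV"
      by (rule nn_integral_has_integral[OF _ _ req r0]) (auto simp: fnpos)
    moreover have "(\<lambda>u. fn n u * indicator (g ` S) u) = (\<lambda>u. if u \<in> g ` S then fn n u else 0)"
      by (auto simp: indicator_def fun_eq_iff)
    ultimately have hi: "(fn n has_integral r) (g ` S)"
      by (simp add: has_integral_restrict_UNIV)
    have ai: "fn n absolutely_integrable_on (g ` S)"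
      using hi by (intro nonnegative_absolutely_integrable_1 fnpos) (auto dest: has_integral_integrable)
    have "(\<lambda>x. \<bar>g' x\<bar> * fn n (g x)) absolutely_integrable_on S \<and>
           integral S (\<lambda>x. \<bar>g' x\<bar> * fn n (g x)) = r"
      using has_absolute_integral_change_of_variables_1'[of S g g' "fn n" r] ai hi der inj
      by (auto simp: integral_unique has_field_derivative_at_within)
    then have hS: "((\<lambda>x. \<bar>g' x\<bar> * fn n (g x)) has_integral r) S"
      by (metis absolutely_integrable_on_def integrable_integral)
    have "(\<integral>\<^sup>+x. ennreal (\<bar>g' x\<bar> * fn n (g x)) * indicator S x \<partial>lborel) = ennreal r"
      by (rule nn_integral_has_integral_lebesgue'[OF _ hS]) (simp add: fnpos)
    then show ?thesis using req by (simp add: ennreal_times_ind)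
  qed
  have L: "(\<integral>\<^sup>+x. ennreal (\<bar>g' x\<bar> * f (g x)) * indicator S x \<partial>lborel) =
        (SUP n. \<integral>\<^sup>+x. ennreal (\<bar>g' x\<bar> * fn n (g x)) * indicator S x \<partial>lborel)"
  proof -
    have "(\<integral>\<^sup>+x. ennreal (\<bar>g' x\<bar> * f (g x)) * indicator S x \<partial>lborel) =
          (\<integral>\<^sup>+x. (SUP n. ennreal (\<bar>g' x\<bar> * fn n (g x)) * indicator S x) \<partial>lborel)"
    proof (rule nn_integral_cong)
      fix x
      have "(SUP n. ennreal (\<bar>g' x\<bar> * fn n (g x)) * indicator S x) =
            (SUP n. (ennreal \<bar>g' x\<bar> * indicator S x) * ennreal (fn n (g x)))"
        by (simp add: ennreal_mult mult_ac fnpos)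
      also have "\<dots> = (ennreal \<bar>g' x\<bar> * indicator S x) * (SUP n. ennreal (fn n (g x)))"
        by (simp add: SUP_mult_left_ennreal)
      also have "(SUP n. ennreal (fn n (g x))) = ennreal (f (g x))"
        unfolding fn_def by (rule trunc_SUP[of f, OF fpos])
      finally show "ennreal (\<bar>g' x\<bar> * f (g x)) * indicator S x =
            (SUP n. ennreal (\<bar>g' x\<bar> * fn n (g x)) * indicator S x)"
        by (simp add: ennreal_mult mult_ac fpos)
    qed
    also have "\<dots> = (SUP n. \<integral>\<^sup>+x. ennreal (\<bar>g' x\<bar> * fn n (g x)) * indicator S x \<partial>lborel)"
    proof (rule nn_integral_monotone_convergence_SUP)
      show "incseq (\<lambda>n x. ennreal (\<bar>g' x\<bar> * fn n (g x)) * indicator S x)"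
        by (auto simp: incseq_def le_fun_def fn_def indicator_def intro!: mult_left_mono ennreal_leI)
      show "\<And>n. (\<lambda>x. ennreal (\<bar>g' x\<bar> * fn n (g x)) * indicator S x) \<in> borel_measurable lborel"
        by measurable
    qed
    finally show ?thesis .
  qed
  have R: "(\<integral>\<^sup>+u. ennreal (f u) * indicator (g ` S) u \<partial>lborel) =
        (SUP n. \<integral>\<^sup>+u. ennreal (fn n u) * indicator (g ` S) u \<partial>lborel)"
  proof -
    have "(\<integral>\<^sup>+u. ennreal (f u) * indicator (g ` S) u \<partial>lborel) =
          (\<integral>\<^sup>+u. (SUP n. ennreal (fn n u) * indicator (g ` S) u) \<partial>lborel)"
      unfolding fn_def by (simp add: SUP_mult_right_ennreal[symmetric] trunc_SUP fpos)
    also have "\<dots> = (SUP n. \<integral>\<^sup>+u. ennreal (fn n u) * indicator (g ` S) u \<partial>lborel)"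
    proof (rule nn_integral_monotone_convergence_SUP)
      show "incseq (\<lambda>n u. ennreal (fn n u) * indicator (g ` S) u)"
        by (auto simp: incseq_def le_fun_def fn_def indicator_def intro!: ennreal_leI)
      show "\<And>n. (\<lambda>u. ennreal (fn n u) * indicator (g ` S) u) \<in> borel_measurable lborel"
        by measurable
    qed
    finally show ?thesis .
  qed
  show ?thesis unfolding L R eqn ..
qed

lemma subst_k:
  fixes h :: "real \<Rightarrow> real" and k :: real
  assumes k: "k \<noteq> 0" and h[measurable]: "h \<in> borel_measurable borel" and hpos: "\<And>u. h u \<ge> 0"
  shows "(\<integral>\<^sup>+\<xi>. ennreal (h ((k - \<xi>) / \<xi>) / \<bar>\<xi>\<bar>) \<partial>lborel) =
         (\<integral>\<^sup>+u. ennreal (h u / \<bar>1 + u\<bar>) \<partial>lborel)"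
proof -
  define g where "g \<xi> = k / \<xi> - 1" for \<xi> :: real
  define g' where "g' \<xi> = - k / \<xi>^2" for \<xi> :: real
  define f where "f u = h u / \<bar>1 + u\<bar>" for u :: real
  have gS: "g ` (- {0}) = - {-1::real}"
  proof (intro equalityI subsetI)
    fix u :: real assume "u \<in> g ` (- {0})"
    then show "u \<in> - {-1}" using k by (auto simp: g_def)
  next
    fix u :: real assume u: "u \<in> - {-1}"
    then have "1 + u \<noteq> 0" by auto
    then have "g (k / (1 + u)) = u" "k / (1 + u) \<in> - {0}" using k by (auto simp: g_def)
    then show "u \<in> g ` (- {0})" by (metis imageI)
  qed
  have inj: "inj_on g (- {0})"
    using k by (auto simp: inj_on_def g_def)
  have der: "(g has_real_derivative g' x) (at x)" if "x \<in> - {0}" for x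
    using that unfolding g_def g'_def
    by (auto intro!: derivative_eq_intros simp: power2_eq_square field_simps)
  have gm: "g \<in> borel_measurable borel" unfolding g_def by measurable
  have g'm: "g' \<in> borel_measurable borel" unfolding g'_def by measurable
  have fm: "f \<in> borel_measurable borel" unfolding f_def by measurable
  have fpos: "\<And>u. f u \<ge> 0" using hpos by (simp add: f_def)
  note main = nn_cov[of "- {0}" g g' f, OF _ _ der inj fm fpos gm g'm]
  have "(\<integral>\<^sup>+\<xi>. ennreal (h ((k - \<xi>) / \<xi>) / \<bar>\<xi>\<bar>) \<partial>lborel) =
        (\<integral>\<^sup>+x. ennreal (\<bar>g' x\<bar> * f (g x)) * indicator (- {0}) x \<partial>lborel)"
  proof (rule nn_integral_cong)
    fix x :: real
    show "ennreal (h ((k - x) / x) / \<bar>x\<bar>) = ennreal (\<bar>g' x\<bar> * f (g x)) * indicator (- {0}) x"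
    proof (cases "x = 0")
      case False
      have e1: "(k - x) / x = k / x - 1" using False by (simp add: diff_divide_distrib)
      have e2: "\<bar>1 + (k / x - 1)\<bar> = \<bar>k\<bar> / \<bar>x\<bar>" by (simp add: abs_divide)
      have e3: "\<bar>- k / x^2\<bar> = \<bar>k\<bar> / \<bar>x\<bar>^2" by (simp add: abs_divide)
      have e4: "K / a^2 * (H / (K / a)) = H / a" if "a > 0" "K > 0" for K a H :: real
        using that by (simp add: field_simps power2_eq_square)
      have "\<bar>g' x\<bar> * f (g x) = h ((k - x) / x) / \<bar>x\<bar>"
        unfolding g_def g'_def f_def e1 e2 e3 using False k by (intro e4) auto
      then show ?thesis using False by simp
    qed simp
  qed
  also have "\<dots> = (\<integral>\<^sup>+u. ennreal (f u) * indicator (g ` (- {0})) u \<partial>lborel)"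
    using main by (simp add: gS)
  also have "\<dots> = (\<integral>\<^sup>+u. ennreal (h u / \<bar>1 + u\<bar>) \<partial>lborel)"
    unfolding gS by (intro nn_integral_cong) (auto simp: f_def indicator_def)
  finally show ?thesis .
qed

lemma cmod_sum_sq: "(cmod (A + B))^2 \<le> 2 * (cmod A)^2 + 2 * (cmod B)^2"
proof -
  have "cmod (A + B) \<le> cmod A + cmod B" by (rule norm_triangle_ineq)
  then have "(cmod (A + B))^2 \<le> (cmod A + cmod B)^2"
    by (intro power_mono) auto
  also have "\<dots> \<le> 2 * (cmod A)^2 + 2 * (cmod B)^2"
    by (smt (verit, best) sum_squares_ge_zero power2_sum zero_le_power2 power2_diff)
  finally show ?thesis .
qed

lemma coef_term:
  fixes F :: "real \<Rightarrow> complex" and a :: complex and k :: int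
  assumes Fm[measurable]: "F \<in> borel_measurable borel" and F0: "F (-1) = 0"
  shows "(\<integral>\<^sup>+\<xi>. ennreal ((cmod (a * cnj (F ((real_of_int k - \<xi>) / \<xi>))))\<^sup>2 / \<bar>\<xi>\<bar>) \<partial>lborel)
     \<le> ennreal ((cmod a)\<^sup>2) * (\<integral>\<^sup>+u. ennreal ((cmod (F u))\<^sup>2 / \<bar>1 + u\<bar>) \<partial>lborel)"
proof (cases "k = 0")
  case True
  have "(\<integral>\<^sup>+\<xi>. ennreal ((cmod (a * cnj (F ((real_of_int k - \<xi>) / \<xi>))))\<^sup>2 / \<bar>\<xi>\<bar>) \<partial>lborel)
       = (\<integral>\<^sup>+\<xi>. 0 \<partial>(lborel::real measure))"
  proof (rule nn_integral_cong)
    fix \<xi> :: real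
    show "ennreal ((cmod (a * cnj (F ((real_of_int k - \<xi>) / \<xi>))))\<^sup>2 / \<bar>\<xi>\<bar>) = 0"
      using True F0 by (cases "\<xi> = 0") auto
  qed
  then show ?thesis by simp
next
  case False
  have "(\<integral>\<^sup>+\<xi>. ennreal ((cmod (a * cnj (F ((real_of_int k - \<xi>) / \<xi>))))\<^sup>2 / \<bar>\<xi>\<bar>) \<partial>lborel)
       = (\<integral>\<^sup>+\<xi>. ennreal ((cmod a)\<^sup>2) * ennreal ((cmod (F ((real_of_int k - \<xi>) / \<xi>)))\<^sup>2 / \<bar>\<xi>\<bar>) \<partial>lborel)"
    by (intro nn_integral_cong) (simp add: norm_mult power_mult_distrib ennreal_mult[symmetric])
  also have "\<dots> = ennreal ((cmod a)\<^sup>2) * (\<integral>\<^sup>+\<xi>. ennreal ((cmod (F ((real_of_int k - \<xi>) / \<xi>)))\<^sup>2 / \<bar>\<xi>\<bar>) \<partial>lborel)"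
    by (rule nn_integral_cmult) measurable
  also have "(\<integral>\<^sup>+\<xi>. ennreal ((cmod (F ((real_of_int k - \<xi>) / \<xi>)))\<^sup>2 / \<bar>\<xi>\<bar>) \<partial>lborel)
      = (\<integral>\<^sup>+u. ennreal ((cmod (F u))\<^sup>2 / \<bar>1 + u\<bar>) \<partial>lborel)"
    using False by (intro subst_k[where h = "\<lambda>u. (cmod (F u))\<^sup>2"]) auto
  finally show ?thesis by simp
qed

lemma cis_der: "((\<lambda>t. cis (a * t) * c) has_vector_derivative (\<i> * of_real a * cis (a * t) * c)) (at t within S)"
proof -
  have "((\<lambda>t. cis (a * t)) has_derivative (\<lambda>h. (a * h) *\<^sub>R (\<i> * cis (a * t)))) (at t within S)"
    by (intro derivative_eq_intros) auto
  then have "((\<lambda>t. cis (a * t)) has_vector_derivative (\<i> * of_real a * cis (a * t))) (at t within S)"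
    unfolding has_vector_derivative_def by (simp add: scaleR_conv_of_real algebra_simps)
  then show ?thesis by (intro derivative_eq_intros) auto
qed

lemma orth_int: "integral {0..1} (\<lambda>t. cis (2 * pi * real_of_int m * t)) = (if m = 0 then 1 else 0)"
proof (cases "m = 0")
  case True then show ?thesis by simp
next
  case False
  define a where "a = 2 * pi * real_of_int m"
  have a: "a \<noteq> 0" using False by (simp add: a_def)
  define c where "c = 1 / (\<i> * of_real a)"
  have "((\<lambda>t. \<i> * of_real a * cis (a * t) * c) has_integral (cis (a * 1) * c - cis (a * 0) * c)) {0..1}"
    by (rule fundamental_theorem_of_calculus) (auto intro: cis_der)
  moreover have "(\<lambda>t. \<i> * of_real a * cis (a * t) * c) = (\<lambda>t. cis (a * t))"
    using a by (auto simp: c_def field_simps)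
  moreover have "cis (a * 1) = 1"
  proof -
    have "cis (a * 1) = cis (2 * pi * real_of_int m)" by (simp add: a_def)
    also have "\<dots> = 1" by (metis cis_multiple_2pi Ints_of_int mult.commute)
    finally show ?thesis .
  qed
  ultimately have "((\<lambda>t. cis (a * t)) has_integral 0) {0..1}" by simp
  then show ?thesis using False by (simp add: a_def integral_unique mult.assoc)
qed

definition ee :: "int \<Rightarrow> real \<Rightarrow> complex" where
  "ee k t = cis (2 * pi * real_of_int k * t)"

definition JJ :: "(real \<Rightarrow> complex) \<Rightarrow> complex" where
  "JJ h = (LINT t|lborel. indicator {0..1} t * h t)"

definition II :: "(real \<Rightarrow> complex) \<Rightarrow> bool" where
  "II h \<longleftrightarrow> integrable lborel (\<lambda>t. indicator {0..1} t * h t)"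

lemma ind_scale: "indicator A x *\<^sub>R h x = (indicator A x :: complex) * h x"
  by (simp add: indicator_def)

lemma JJ_set: "set_lebesgue_integral lborel {0..1} h = JJ h"
  unfolding set_lebesgue_integral_def JJ_def by (simp only: ind_scale)

lemma II_set: "set_integrable lborel {0..1} h \<longleftrightarrow> II h"
  unfolding set_integrable_def II_def by (simp only: ind_scale)

lemma II_add: "II h \<Longrightarrow> II g \<Longrightarrow> II (\<lambda>t. h t + g t)"
  unfolding II_def by (simp add: distrib_left)

lemma JJ_add: "II h \<Longrightarrow> II g \<Longrightarrow> JJ (\<lambda>t. h t + g t) = JJ h + JJ g"
  unfolding II_def JJ_def by (simp add: distrib_left)

lemma II_diff: "II h \<Longrightarrow> II g \<Longrightarrow> II (\<lambda>t. h t - g t)"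
  unfolding II_def by (simp add: right_diff_distrib)

lemma JJ_diff: "II h \<Longrightarrow> II g \<Longrightarrow> JJ (\<lambda>t. h t - g t) = JJ h - JJ g"
  unfolding II_def JJ_def by (simp add: right_diff_distrib)

lemma II_cmult: "II h \<Longrightarrow> II (\<lambda>t. c * h t)"
  unfolding II_def by (simp add: mult.left_commute[of _ c])

lemma JJ_cmult: "JJ (\<lambda>t. c * h t) = c * JJ h"
  unfolding JJ_def by (simp add: mult.left_commute[of _ c])

lemma II_sum: "(\<And>i. i \<in> A \<Longrightarrow> II (h i)) \<Longrightarrow> II (\<lambda>t. \<Sum>i\<in>A. h i t)"
  unfolding II_def by (simp add: sum_distrib_left)

lemma JJ_sum: "(\<And>i. i \<in> A \<Longrightarrow> II (h i)) \<Longrightarrow> JJ (\<lambda>t. \<Sum>i\<in>A. h i t) = (\<Sum>i\<in>A. JJ (h i))"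
  unfolding II_def JJ_def by (simp add: sum_distrib_left)

lemma JJ_cnj: "JJ (\<lambda>t. cnj (h t)) = cnj (JJ h)"
proof -
  have "(\<lambda>t. indicator {0..1} t * cnj (h t)) = (\<lambda>t. cnj (indicator {0..1} t * h t))"
    by (auto simp: fun_eq_iff indicator_def)
  then have "JJ (\<lambda>t. cnj (h t)) = (LINT t|lborel. cnj (indicator {0..1} t * h t))"
    unfolding JJ_def by simp
  also have "\<dots> = cnj (JJ h)" unfolding JJ_def by (rule Bochner_Integration.integral_cnj)
  finally show ?thesis .
qed

lemma ee_prod: "ee j t * cnj (ee k t) = cis (2 * pi * real_of_int (j - k) * t)"
  by (simp add: ee_def cis_cnj cis_mult algebra_simps)

lemma II_ee: "II (\<lambda>t. ee j t * cnj (ee k t))"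
proof -
  have "integrable lborel (\<lambda>t. indicator {0..1::real} t *\<^sub>R cis (2 * pi * real_of_int (j - k) * t))"
    by (rule borel_integrable_compact) (auto intro!: continuous_intros)
  then show ?thesis using II_set[of "\<lambda>t. ee j t * cnj (ee k t)"] unfolding set_integrable_def ee_prod by simp
qed

lemma JJ_ee: "JJ (\<lambda>t. ee j t * cnj (ee k t)) = (if j = k then 1 else 0)"
proof -
  have si: "set_integrable lborel {0..1} (\<lambda>t. ee j t * cnj (ee k t))"
    using II_ee II_set by blast
  have "JJ (\<lambda>t. ee j t * cnj (ee k t)) = integral {0..1} (\<lambda>t. ee j t * cnj (ee k t))"
    using set_borel_integral_eq_integral(2)[OF si] JJ_set by simp
  also have "\<dots> = (if j = k then 1 else 0)"
    unfolding ee_prod orth_int by simp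
  finally show ?thesis .
qed

lemma fc_JJ: "fourier_coeff f k = JJ (\<lambda>t. f t * cnj (ee k t))"
  unfolding fourier_coeff_def JJ_set[symmetric] by (simp add: ee_def cis_cnj)

definition RR :: "(real \<Rightarrow> complex) \<Rightarrow> real" where
  "RR f = (LINT t|lborel. indicator {0..1} t * (cmod (f t))\<^sup>2)"

lemma L2_facts:
  assumes "L2_01 f"
  shows "integrable lborel (\<lambda>t. indicator {0..1} t * (cmod (f t))\<^sup>2)"
    and "ennreal (RR f) = (\<integral>\<^sup>+ t\<in>{0..1}. ennreal ((cmod (f t))\<^sup>2) \<partial>lborel)"
    and "II (\<lambda>t. f t * cnj (f t))" and "JJ (\<lambda>t. f t * cnj (f t)) = of_real (RR f)"
    and "II (\<lambda>t. f t * cnj (ee k t))"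
proof -
  have fm[measurable]: "f \<in> borel_measurable lborel" and fin: "(\<integral>\<^sup>+ t\<in>{0..1}. ennreal ((cmod (f t))\<^sup>2) \<partial>lborel) < \<infinity>"
    using assms by (auto simp: L2_01_def)
  have eqn: "(\<integral>\<^sup>+ t. ennreal (indicator {0..1} t * (cmod (f t))\<^sup>2) \<partial>lborel) = (\<integral>\<^sup>+ t\<in>{0..1}. ennreal ((cmod (f t))\<^sup>2) \<partial>lborel)"
    by (intro nn_integral_cong) (simp add: indicator_def)
  show int: "integrable lborel (\<lambda>t. indicator {0..1} t * (cmod (f t))\<^sup>2)"
    by (rule integrableI_nonneg) (use fin eqn in auto)
  show "ennreal (RR f) = (\<integral>\<^sup>+ t\<in>{0..1}. ennreal ((cmod (f t))\<^sup>2) \<partial>lborel)"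
    unfolding RR_def eqn[symmetric] by (rule nn_integral_eq_integral[symmetric]) (use int in auto)
  have fc: "(\<lambda>t. indicator {0..1} t * (f t * cnj (f t))) = (\<lambda>t. complex_of_real (indicator {0..1} t * (cmod (f t))\<^sup>2))"
    by (auto simp: fun_eq_iff indicator_def complex_norm_square[symmetric])
  show "II (\<lambda>t. f t * cnj (f t))" unfolding II_def fc complex_of_real_integrable_eq by (rule int)
  show "JJ (\<lambda>t. f t * cnj (f t)) = of_real (RR f)" unfolding JJ_def fc RR_def by (rule integral_complex_of_real)
  have cm[measurable]: "(\<lambda>t. cnj (ee k t)) \<in> borel_measurable borel"
    unfolding ee_def by (intro borel_measurable_continuous_onI continuous_intros)
  have ind: "integrable lborel (\<lambda>t::real. indicator {0..1} t :: real)"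
    by (simp add: integrable_indicator_iff)
  show "II (\<lambda>t. f t * cnj (ee k t))" unfolding II_def
  proof (rule Bochner_Integration.integrable_bound[OF Bochner_Integration.integrable_add[OF ind int]])
    show "(\<lambda>t. indicator {0..1} t * (f t * cnj (ee k t))) \<in> borel_measurable lborel"
      by measurable
    show "AE t in lborel. norm (indicator {0..1} t * (f t * cnj (ee k t))) \<le>
        norm (indicator {0..1} t + indicator {0..1} t * (cmod (f t))\<^sup>2)"
    proof (rule AE_I2)
      fix t :: real
      have y: "y \<le> 1 + y\<^sup>2" for y :: real
      proof -
        have "0 \<le> (y - 1)\<^sup>2" by simp
        then have "2 * y \<le> y\<^sup>2 + 1" by (simp add: power2_diff)
        moreover have "0 \<le> y\<^sup>2" by simp
        ultimately show ?thesis by linarith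
      qed
      have n1: "norm (cnj (ee k t)) = 1" "cmod (ee k t) = 1" by (simp_all add: ee_def)
      show "norm (indicator {0..1} t * (f t * cnj (ee k t))) \<le>
        norm (indicator {0..1} t + indicator {0..1} t * (cmod (f t))\<^sup>2)"
      proof (cases "t \<in> {0..1}")
        case True
        have "norm (indicator {0..1} t * (f t * cnj (ee k t))) = cmod (f t)"
          using True by (simp add: norm_mult n1)
        also have "\<dots> \<le> 1 + (cmod (f t))\<^sup>2" by (rule y)
        also have "\<dots> = norm (indicator {0..1} t + indicator {0..1} t * (cmod (f t))\<^sup>2)"
          using True by simp
        finally show ?thesis .
      qed simp
    qed
  qed
qed

lemma JJ_sq_nonneg: "\<exists>r\<ge>0. JJ (\<lambda>t. h t * cnj (h t)) = of_real r"
proof -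
  have fc: "(\<lambda>t. indicator {0..1} t * (h t * cnj (h t))) = (\<lambda>t. complex_of_real (indicator {0..1} t * (cmod (h t))\<^sup>2))"
    by (auto simp: fun_eq_iff indicator_def complex_norm_square[symmetric])
  have e: "JJ (\<lambda>t. h t * cnj (h t)) = of_real (LINT t|lborel. indicator {0..1} t * (cmod (h t))\<^sup>2)"
    unfolding JJ_def fc by (rule integral_complex_of_real)
  have p: "(LINT t|lborel. indicator {0..1} t * (cmod (h t))\<^sup>2) \<ge> 0"
    by (intro Bochner_Integration.integral_nonneg) auto
  show ?thesis by (rule exI[of _ "LINT t|lborel. indicator {0..1} t * (cmod (h t))\<^sup>2"]) (use e p in simp)
qed

lemma bessel_fin:
  assumes f: "L2_01 f" and F: "finite F"
  shows "(\<Sum>k\<in>F. (cmod (fourier_coeff f k))\<^sup>2) \<le> RR f"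
proof -
  define c where "c k = fourier_coeff f k" for k
  define P where "P = (\<Sum>k\<in>F. (cmod (c k))\<^sup>2)"
  define s where "s t = (\<Sum>k\<in>F. c k * ee k t)" for t
  note L = L2_facts[OF f]
  have IB: "II (\<lambda>t. cnj (c k) * (f t * cnj (ee k t)))" for k
    by (intro II_cmult L(5))
  have IE: "II (\<lambda>t. (c j * cnj (c k)) * (ee j t * cnj (ee k t)))" for j k
    by (intro II_cmult II_ee)
  have Beq: "(\<lambda>t. f t * cnj (s t)) = (\<lambda>t. \<Sum>k\<in>F. cnj (c k) * (f t * cnj (ee k t)))"
    by (auto simp: fun_eq_iff s_def sum_distrib_left mult_ac)
  have Ceq: "(\<lambda>t. s t * cnj (f t)) = (\<lambda>t. cnj (\<Sum>k\<in>F. cnj (c k) * (f t * cnj (ee k t))))"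
    by (auto simp: fun_eq_iff s_def sum_distrib_left mult_ac)
  have Deq: "(\<lambda>t. s t * cnj (s t)) = (\<lambda>t. \<Sum>k\<in>F. \<Sum>j\<in>F. (c j * cnj (c k)) * (ee j t * cnj (ee k t)))"
    by (simp add: fun_eq_iff s_def sum_distrib_left sum_distrib_right mult_ac)
  have IBs: "II (\<lambda>t. f t * cnj (s t))" unfolding Beq by (intro II_sum IB)
  have ICs: "II (\<lambda>t. s t * cnj (f t))" unfolding Ceq II_def
  proof -
    have "integrable lborel (\<lambda>t. cnj (indicator {0..1} t * (f t * cnj (s t))))"
      using IBs unfolding II_def complex_integrable_cnj .
    moreover have "(\<lambda>t. cnj (indicator {0..1} t * (f t * cnj (s t)))) = (\<lambda>t. indicator {0..1} t * cnj (\<Sum>k\<in>F. cnj (c k) * (f t * cnj (ee k t))))"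
      using Beq by (auto simp: fun_eq_iff indicator_def)
    ultimately show "integrable lborel (\<lambda>t. indicator {0..1} t * cnj (\<Sum>k\<in>F. cnj (c k) * (f t * cnj (ee k t))))" by simp
  qed
  have IDs: "II (\<lambda>t. s t * cnj (s t))" unfolding Deq by (intro II_sum IE)
  have cc: "cnj z * z = complex_of_real ((cmod z)\<^sup>2)" for z
    by (simp only: complex_norm_square mult.commute)
  have JB: "JJ (\<lambda>t. f t * cnj (s t)) = of_real P"
    unfolding Beq by (simp add: JJ_sum IB JJ_cmult fc_JJ[symmetric] c_def[symmetric] cc P_def)
  have JC: "JJ (\<lambda>t. s t * cnj (f t)) = of_real P"
  proof -
    have "JJ (\<lambda>t. s t * cnj (f t)) = cnj (JJ (\<lambda>t. f t * cnj (s t)))"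
      unfolding JJ_cnj[symmetric] by (simp add: mult.commute)
    then show ?thesis using JB by simp
  qed
  have JD: "JJ (\<lambda>t. s t * cnj (s t)) = of_real P"
  proof -
    have "JJ (\<lambda>t. s t * cnj (s t)) = (\<Sum>k\<in>F. \<Sum>j\<in>F. (c j * cnj (c k)) * (if j = k then 1 else 0))"
      unfolding Deq by (simp add: JJ_sum II_sum IE JJ_cmult JJ_ee)
    also have "\<dots> = (\<Sum>j\<in>F. c j * cnj (c j))"
      using F by (simp add: if_distrib sum.delta' cong: if_cong)
    also have "\<dots> = of_real P" by (simp only: P_def complex_norm_square of_real_sum)
    finally show ?thesis .
  qed
  have diff: "(\<lambda>t. (f t - s t) * cnj (f t - s t)) =
     (\<lambda>t. ((f t * cnj (f t) - f t * cnj (s t)) - s t * cnj (f t)) + s t * cnj (s t))"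
    by (auto simp: fun_eq_iff algebra_simps)
  have "JJ (\<lambda>t. (f t - s t) * cnj (f t - s t)) = of_real (RR f) - of_real P - of_real P + of_real P"
    unfolding diff
    by (simp add: JJ_add JJ_diff II_add II_diff L(3) IBs ICs IDs L(4) JB JC JD)
  moreover obtain r where "r \<ge> 0" "JJ (\<lambda>t. (f t - s t) * cnj (f t - s t)) = of_real r"
    using JJ_sq_nonneg[of "\<lambda>t. f t - s t"] by (elim exE conjE) simp
  ultimately have "of_real r = (of_real (RR f - P) :: complex)" by simp
  then have "r = RR f - P" by (simp only: of_real_eq_iff)
  with \<open>r \<ge> 0\<close> show ?thesis by (simp add: P_def c_def)
qed

lemma bessel:
  assumes f: "L2_01 f"
  shows "(\<Sum>\<^sub>\<infinity>k\<in>UNIV. ennreal ((cmod (fourier_coeff f k))\<^sup>2)) \<le> ennreal (RR f)"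
proof -
  have "(\<Sum>\<^sub>\<infinity>k\<in>UNIV. ennreal ((cmod (fourier_coeff f k))\<^sup>2)) =
     (SUP F\<in>{F. finite F \<and> F \<subseteq> UNIV}. sum (\<lambda>k. ennreal ((cmod (fourier_coeff f k))\<^sup>2)) F)"
    by (rule nonneg_infsum_complete) simp
  also have "\<dots> \<le> ennreal (RR f)"
  proof (rule SUP_least)
    fix F assume "F \<in> {F. finite F \<and> F \<subseteq> (UNIV :: int set)}"
    then have "finite F" by simp
    then show "sum (\<lambda>k. ennreal ((cmod (fourier_coeff f k))\<^sup>2)) F \<le> ennreal (RR f)"
      using bessel_fin[OF f \<open>finite F\<close>] by (simp add: sum_ennreal ennreal_leI)
  qed
  finally show ?thesis .
qed

lemma borel_measurable_cnj'[measurable (raw)]: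
  "f \<in> borel_measurable M \<Longrightarrow> (\<lambda>x. cnj (f x)) \<in> borel_measurable M"
  by (rule measurable_compose[OF _ borel_measurable_continuous_onI[OF continuous_on_cnj[OF continuous_on_id]]])

lemma Ybound:
  fixes F :: "real \<Rightarrow> complex" and a :: "int \<Rightarrow> complex"
  assumes Fm[measurable]: "F \<in> borel_measurable borel" and F0: "F (-1) = 0"
  shows "Y_sq (\<lambda>k \<xi>. a k * cnj (F ((real_of_int k - \<xi>) / \<xi>)))
     \<le> (\<integral>\<^sup>+u. ennreal ((cmod (F u))\<^sup>2 / \<bar>1 + u\<bar>) \<partial>lborel) * (\<Sum>\<^sub>\<infinity>k\<in>UNIV. ennreal ((cmod (a k))\<^sup>2))"
proof -
  have "Y_sq (\<lambda>k \<xi>. a k * cnj (F ((real_of_int k - \<xi>) / \<xi>)))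
     \<le> (\<Sum>\<^sub>\<infinity>k\<in>UNIV. (\<integral>\<^sup>+u. ennreal ((cmod (F u))\<^sup>2 / \<bar>1 + u\<bar>) \<partial>lborel) * ennreal ((cmod (a k))\<^sup>2))"
    unfolding Y_sq_def
    by (intro infsum_ennreal_mono) (simp add: coef_term[OF Fm F0] mult.commute)
  also have "\<dots> = (\<integral>\<^sup>+u. ennreal ((cmod (F u))\<^sup>2 / \<bar>1 + u\<bar>) \<partial>lborel) * (\<Sum>\<^sub>\<infinity>k\<in>UNIV. ennreal ((cmod (a k))\<^sup>2))"
    by (rule infsum_ennreal_cmult)
  finally show ?thesis .
qed

lemma Ydiff_bound:
  fixes F G :: "real \<Rightarrow> complex" and a b :: "int \<Rightarrow> complex"
  assumes Fm[measurable]: "F \<in> borel_measurable borel" and F0: "F (-1) = 0"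
    and Gm[measurable]: "G \<in> borel_measurable borel" and G0: "G (-1) = 0"
  defines "WF \<equiv> (\<integral>\<^sup>+u. ennreal ((cmod (F u))\<^sup>2 / \<bar>1 + u\<bar>) \<partial>lborel)"
    and "WD \<equiv> (\<integral>\<^sup>+u. ennreal ((cmod (F u - G u))\<^sup>2 / \<bar>1 + u\<bar>) \<partial>lborel)"
  shows "Y_sq (\<lambda>k \<xi>. a k * cnj (F ((real_of_int k - \<xi>) / \<xi>)) - b k * cnj (G ((real_of_int k - \<xi>) / \<xi>)))
     \<le> (2 * WF) * (\<Sum>\<^sub>\<infinity>k\<in>UNIV. ennreal ((cmod (a k - b k))\<^sup>2)) + (2 * WD) * (\<Sum>\<^sub>\<infinity>k\<in>UNIV. ennreal ((cmod (b k))\<^sup>2))"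
proof -
  have Dm[measurable]: "(\<lambda>u. F u - G u) \<in> borel_measurable borel" by measurable
  have D0: "F (-1) - G (-1) = 0" using F0 G0 by simp
  have hterm: "(\<integral>\<^sup>+\<xi>. ennreal ((cmod (a k * cnj (F ((real_of_int k - \<xi>) / \<xi>)) - b k * cnj (G ((real_of_int k - \<xi>) / \<xi>))))\<^sup>2 / \<bar>\<xi>\<bar>) \<partial>lborel)
      \<le> (2 * WF) * ennreal ((cmod (a k - b k))\<^sup>2) + (2 * WD) * ennreal ((cmod (b k))\<^sup>2)" for k
  proof -
    define X where "X \<xi> = (cmod ((a k - b k) * cnj (F ((real_of_int k - \<xi>) / \<xi>))))\<^sup>2 / \<bar>\<xi>\<bar>" for \<xi>
    define Y where "Y \<xi> = (cmod (b k * cnj ((\<lambda>u. F u - G u) ((real_of_int k - \<xi>) / \<xi>))))\<^sup>2 / \<bar>\<xi>\<bar>" for \<xi>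
    have Xm[measurable]: "X \<in> borel_measurable borel" unfolding X_def by measurable
    have Ym[measurable]: "Y \<in> borel_measurable borel" unfolding Y_def by measurable
    have "(\<integral>\<^sup>+\<xi>. ennreal ((cmod (a k * cnj (F ((real_of_int k - \<xi>) / \<xi>)) - b k * cnj (G ((real_of_int k - \<xi>) / \<xi>))))\<^sup>2 / \<bar>\<xi>\<bar>) \<partial>lborel)
        \<le> (\<integral>\<^sup>+\<xi>. 2 * ennreal (X \<xi>) + 2 * ennreal (Y \<xi>) \<partial>lborel)"
    proof (rule nn_integral_mono)
      fix \<xi> :: real
      define p where "p = F ((real_of_int k - \<xi>) / \<xi>)"
      define q where "q = G ((real_of_int k - \<xi>) / \<xi>)"
      have eq: "a k * cnj p - b k * cnj q = (a k - b k) * cnj p + b k * cnj (p - q)"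
        by (simp add: algebra_simps)
      have "(cmod (a k * cnj p - b k * cnj q))\<^sup>2 / \<bar>\<xi>\<bar> \<le>
            (2 * (cmod ((a k - b k) * cnj p))\<^sup>2 + 2 * (cmod (b k * cnj (p - q)))\<^sup>2) / \<bar>\<xi>\<bar>"
        unfolding eq by (intro divide_right_mono cmod_sum_sq) simp
      also have "\<dots> = 2 * X \<xi> + 2 * Y \<xi>"
        by (simp add: X_def Y_def p_def q_def add_divide_distrib)
      finally have le: "(cmod (a k * cnj p - b k * cnj q))\<^sup>2 / \<bar>\<xi>\<bar> \<le> 2 * X \<xi> + 2 * Y \<xi>" .
      have X0: "X \<xi> \<ge> 0" "Y \<xi> \<ge> 0" by (simp_all add: X_def Y_def)
      have "ennreal ((cmod (a k * cnj p - b k * cnj q))\<^sup>2 / \<bar>\<xi>\<bar>) \<le> ennreal (2 * X \<xi> + 2 * Y \<xi>)"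
        using le by (rule ennreal_leI)
      also have "\<dots> = 2 * ennreal (X \<xi>) + 2 * ennreal (Y \<xi>)"
        using X0 by (simp add: ennreal_mult)
      finally show "ennreal ((cmod (a k * cnj (F ((real_of_int k - \<xi>) / \<xi>)) - b k * cnj (G ((real_of_int k - \<xi>) / \<xi>))))\<^sup>2 / \<bar>\<xi>\<bar>)
          \<le> 2 * ennreal (X \<xi>) + 2 * ennreal (Y \<xi>)" by (simp add: p_def q_def)
    qed
    also have "\<dots> = 2 * (\<integral>\<^sup>+\<xi>. ennreal (X \<xi>) \<partial>lborel) + 2 * (\<integral>\<^sup>+\<xi>. ennreal (Y \<xi>) \<partial>lborel)"
      by (simp add: nn_integral_add nn_integral_cmult)
    also have "\<dots> \<le> 2 * (ennreal ((cmod (a k - b k))\<^sup>2) * WF) + 2 * (ennreal ((cmod (b k))\<^sup>2) * WD)"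
      unfolding X_def Y_def WF_def WD_def
      by (intro add_mono mult_left_mono coef_term[OF Fm F0] coef_term[OF Dm D0]) auto
    also have "\<dots> = (2 * WF) * ennreal ((cmod (a k - b k))\<^sup>2) + (2 * WD) * ennreal ((cmod (b k))\<^sup>2)"
      by (simp add: mult_ac)
    finally show ?thesis .
  qed
  have "Y_sq (\<lambda>k \<xi>. a k * cnj (F ((real_of_int k - \<xi>) / \<xi>)) - b k * cnj (G ((real_of_int k - \<xi>) / \<xi>)))
     \<le> (\<Sum>\<^sub>\<infinity>k\<in>UNIV. (2 * WF) * ennreal ((cmod (a k - b k))\<^sup>2) + (2 * WD) * ennreal ((cmod (b k))\<^sup>2))"
    unfolding Y_sq_def by (intro infsum_ennreal_mono hterm)
  also have "\<dots> = (2 * WF) * (\<Sum>\<^sub>\<infinity>k\<in>UNIV. ennreal ((cmod (a k - b k))\<^sup>2)) + (2 * WD) * (\<Sum>\<^sub>\<infinity>k\<in>UNIV. ennreal ((cmod (b k))\<^sup>2))"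
    by (simp add: infsum_ennreal_add infsum_ennreal_cmult)
  finally show ?thesis .
qed

lemma ennreal_le2:
  assumes "0 \<le> x" "0 \<le> y" "z \<le> 2 * x + 2 * y"
  shows "ennreal z \<le> 2 * ennreal x + 2 * ennreal y"
proof -
  have "ennreal z \<le> ennreal (2 * x + 2 * y)" using assms(3) by (rule ennreal_leI)
  also have "\<dots> = 2 * ennreal x + 2 * ennreal y" using assms(1,2) by (simp add: ennreal_mult)
  finally show ?thesis .
qed

lemma RR_nonneg: "RR f \<ge> 0"
  unfolding RR_def by (intro Bochner_Integration.integral_nonneg) auto

lemma L2_diff:
  assumes f: "L2_01 f" and g: "L2_01 g"
  shows "L2_01 (\<lambda>t. f t - g t)"
proof -
  have fm[measurable]: "f \<in> borel_measurable lborel" and gm[measurable]: "g \<in> borel_measurable lborel"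
    using f g by (auto simp: L2_01_def)
  have "(\<integral>\<^sup>+ t\<in>{0..1}. ennreal ((cmod (f t - g t))\<^sup>2) \<partial>lborel)
      \<le> (\<integral>\<^sup>+ t\<in>{0..1}. 2 * ennreal ((cmod (f t))\<^sup>2) + 2 * ennreal ((cmod (g t))\<^sup>2) \<partial>lborel)"
  proof (rule nn_integral_mono)
    fix t :: real
    have "(cmod (f t - g t))\<^sup>2 \<le> 2 * (cmod (f t))\<^sup>2 + 2 * (cmod (- g t))\<^sup>2"
      using cmod_sum_sq[of "f t" "- g t"] by simp
    then have "ennreal ((cmod (f t - g t))\<^sup>2) \<le> 2 * ennreal ((cmod (f t))\<^sup>2) + 2 * ennreal ((cmod (g t))\<^sup>2)"
      by (intro ennreal_le2) auto
    then show "ennreal ((cmod (f t - g t))\<^sup>2) * indicator {0..1} t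
      \<le> (2 * ennreal ((cmod (f t))\<^sup>2) + 2 * ennreal ((cmod (g t))\<^sup>2)) * indicator {0..1} t"
      by (simp add: indicator_def)
  qed
  also have "\<dots> = 2 * (\<integral>\<^sup>+ t\<in>{0..1}. ennreal ((cmod (f t))\<^sup>2) \<partial>lborel) + 2 * (\<integral>\<^sup>+ t\<in>{0..1}. ennreal ((cmod (g t))\<^sup>2) \<partial>lborel)"
    by (simp add: distrib_right nn_integral_add nn_integral_cmult mult.assoc)
  also have "\<dots> < \<infinity>" using f g by (simp add: L2_01_def ennreal_mult_less_top)
  finally show ?thesis unfolding L2_01_def by simp
qed

lemma fc_diff:
  assumes f: "L2_01 f" and g: "L2_01 g"
  shows "fourier_coeff f k - fourier_coeff g k = fourier_coeff (\<lambda>t. f t - g t) k"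
proof -
  have "fourier_coeff f k - fourier_coeff g k = JJ (\<lambda>t. f t * cnj (ee k t) - g t * cnj (ee k t))"
    unfolding fc_JJ by (rule JJ_diff[symmetric]) (intro L2_facts(5) f g)+
  then show ?thesis unfolding fc_JJ by (simp add: left_diff_distrib)
qed

lemma L2_dist_RR:
  assumes f: "L2_01 f" and g: "L2_01 g"
  shows "RR (\<lambda>t. f t - g t) = (L2_dist f g)\<^sup>2"
proof -
  have "ennreal (RR (\<lambda>t. f t - g t)) = (\<integral>\<^sup>+ t\<in>{0..1}. ennreal ((cmod (f t - g t))\<^sup>2) \<partial>lborel)"
    using L2_facts(2)[OF L2_diff[OF f g]] by simp
  then have "enn2real (\<integral>\<^sup>+ t\<in>{0..1}. ennreal ((cmod (f t - g t))\<^sup>2) \<partial>lborel) = RR (\<lambda>t. f t - g t)"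
    by (metis RR_nonneg enn2real_ennreal)
  then show ?thesis unfolding L2_dist_def using RR_nonneg by simp
qed

lemma RR_bound:
  assumes f: "L2_01 f" and g: "L2_01 g"
  shows "RR g \<le> 2 * RR f + 2 * RR (\<lambda>t. f t - g t)"
proof -
  note i1 = L2_facts(1)[OF f] and i2 = L2_facts(1)[OF L2_diff[OF f g]] and i3 = L2_facts(1)[OF g]
  have "RR g \<le> (LINT t|lborel. 2 * (indicator {0..1} t * (cmod (f t))\<^sup>2) + 2 * (indicator {0..1} t * (cmod (f t - g t))\<^sup>2))"
    unfolding RR_def
  proof (rule integral_mono)
    show "integrable lborel (\<lambda>t. indicator {0..1} t * (cmod (g t))\<^sup>2)" by (rule i3)
    show "integrable lborel (\<lambda>t. 2 * (indicator {0..1} t * (cmod (f t))\<^sup>2) + 2 * (indicator {0..1} t * (cmod (f t - g t))\<^sup>2))"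
      using i1 i2 by simp
    fix t :: real
    have "(cmod (f t - (f t - g t)))\<^sup>2 \<le> 2 * (cmod (f t))\<^sup>2 + 2 * (cmod (- (f t - g t)))\<^sup>2"
      using cmod_sum_sq[of "f t" "- (f t - g t)"] by simp
    then have "(cmod (g t))\<^sup>2 \<le> 2 * (cmod (f t))\<^sup>2 + 2 * (cmod (f t - g t))\<^sup>2"
      by (simp only: norm_minus_cancel) simp
    then show "indicator {0..1} t * (cmod (g t))\<^sup>2 \<le> 2 * (indicator {0..1} t * (cmod (f t))\<^sup>2) + 2 * (indicator {0..1} t * (cmod (f t - g t))\<^sup>2)"
      by (simp add: indicator_def)
  qed
  also have "\<dots> = 2 * RR f + 2 * RR (\<lambda>t. f t - g t)"
    unfolding RR_def using i1 i2 by simp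
  finally show ?thesis .
qed

lemma Z_facts:
  assumes "schwartz \<phi>" "in_Z \<phi>"
  shows "FT \<phi> \<in> borel_measurable borel" "FT \<phi> (-1) = 0" "Z_sq \<phi> = ennreal (enn2real (Z_sq \<phi>))"
proof -
  have c: "continuous_on UNIV (FT \<phi>)" by (rule FT_cont[OF assms(1)])
  then show "FT \<phi> \<in> borel_measurable borel" by (rule borel_measurable_continuous_onI)
  show "FT \<phi> (-1) = 0"
    by (rule vanish_at_sing) (use c assms(2) in \<open>auto simp: in_Z_def Z_sq_def continuous_on_eq_continuous_at\<close>)
  show "Z_sq \<phi> = ennreal (enn2real (Z_sq \<phi>))" using assms(2) by (simp add: in_Z_def ennreal_enn2real_if)
qed

lemma Z_dist_eq:
  assumes "schwartz \<phi>" "in_Z \<phi>" "schwartz \<psi>" "in_Z \<psi>"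
  shows "(\<integral>\<^sup>+u. ennreal ((cmod (FT \<phi> u - FT \<psi> u))\<^sup>2 / \<bar>1 + u\<bar>) \<partial>lborel) = ennreal ((Z_dist \<phi> \<psi>)\<^sup>2)"
proof -
  have m1[measurable]: "FT \<phi> \<in> borel_measurable borel" and m2[measurable]: "FT \<psi> \<in> borel_measurable borel"
    using Z_facts assms by auto
  have "(\<integral>\<^sup>+u. ennreal ((cmod (FT \<phi> u - FT \<psi> u))\<^sup>2 / \<bar>1 + u\<bar>) \<partial>lborel)
     \<le> (\<integral>\<^sup>+u. 2 * ennreal ((cmod (FT \<phi> u))\<^sup>2 / \<bar>1 + u\<bar>) + 2 * ennreal ((cmod (FT \<psi> u))\<^sup>2 / \<bar>1 + u\<bar>) \<partial>lborel)"
  proof (rule nn_integral_mono)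
    fix u :: real
    have "(cmod (FT \<phi> u - FT \<psi> u))\<^sup>2 \<le> 2 * (cmod (FT \<phi> u))\<^sup>2 + 2 * (cmod (FT \<psi> u))\<^sup>2"
      using cmod_sum_sq[of "FT \<phi> u" "- FT \<psi> u"] by simp
    then have "(cmod (FT \<phi> u - FT \<psi> u))\<^sup>2 / \<bar>1 + u\<bar> \<le> 2 * ((cmod (FT \<phi> u))\<^sup>2 / \<bar>1 + u\<bar>) + 2 * ((cmod (FT \<psi> u))\<^sup>2 / \<bar>1 + u\<bar>)"
      by (simp add: divide_right_mono add_divide_distrib[symmetric])
    then show "ennreal ((cmod (FT \<phi> u - FT \<psi> u))\<^sup>2 / \<bar>1 + u\<bar>) \<le> 2 * ennreal ((cmod (FT \<phi> u))\<^sup>2 / \<bar>1 + u\<bar>) + 2 * ennreal ((cmod (FT \<psi> u))\<^sup>2 / \<bar>1 + u\<bar>)"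
      by (intro ennreal_le2) auto
  qed
  also have "\<dots> = 2 * Z_sq \<phi> + 2 * Z_sq \<psi>"
    unfolding Z_sq_def by (simp add: nn_integral_add nn_integral_cmult)
  also have "\<dots> < \<infinity>" using assms by (simp add: in_Z_def ennreal_mult_less_top)
  finally have fin: "(\<integral>\<^sup>+u. ennreal ((cmod (FT \<phi> u - FT \<psi> u))\<^sup>2 / \<bar>1 + u\<bar>) \<partial>lborel) < \<infinity>" .
  then show ?thesis unfolding Z_dist_def by (simp add: ennreal_enn2real_if)
qed

lemma part1:
  assumes f: "L2_01 f" and p: "schwartz \<phi>" "in_Z \<phi>"
  shows "in_Y (S_coeffs f \<phi>)"
proof -
  note Z = Z_facts[OF p]
  have m[measurable]: "FT \<phi> \<in> borel_measurable borel" by (rule Z(1))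
  have "S_coeffs f \<phi> k \<in> borel_measurable lborel" for k
    unfolding S_coeffs_def by measurable
  moreover have "Y_sq (S_coeffs f \<phi>) < \<infinity>"
  proof -
    have "Y_sq (S_coeffs f \<phi>) \<le> Z_sq \<phi> * (\<Sum>\<^sub>\<infinity>k\<in>UNIV. ennreal ((cmod (fourier_coeff f k))\<^sup>2))"
      unfolding S_coeffs_def[abs_def] Z_sq_def by (rule Ybound[OF m Z(2)])
    also have "\<dots> \<le> Z_sq \<phi> * ennreal (RR f)"
      by (intro mult_left_mono bessel f) simp
    also have "\<dots> < \<infinity>" using p(2) by (simp add: in_Z_def ennreal_mult_less_top)
    finally show ?thesis .
  qed
  ultimately show ?thesis unfolding in_Y_def by blast
qed

lemma part2:
  assumes f: "L2_01 f" and p: "schwartz \<phi>" "in_Z \<phi>" and e: "\<epsilon> > 0"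
  shows "\<exists>\<delta>>0. \<forall>g \<psi>. L2_01 g \<and> schwartz \<psi> \<and> in_Z \<psi> \<and>
                L2_dist f g < \<delta> \<and> Z_dist \<phi> \<psi> < \<delta> \<longrightarrow>
                Y_dist (S_coeffs f \<phi>) (S_coeffs g \<psi>) < \<epsilon>"
proof -
  note Zp = Z_facts[OF p]
  define Zf where "Zf = enn2real (Z_sq \<phi>)"
  define Nf where "Nf = RR f"
  have Zf0: "Zf \<ge> 0" by (simp add: Zf_def)
  have Nf0: "Nf \<ge> 0" by (simp add: Nf_def RR_nonneg)
  define K where "K = 2 * Zf + 4 * Nf + 4"
  have K0: "K > 0" using Zf0 Nf0 by (simp add: K_def)
  define \<delta> where "\<delta> = min 1 (\<epsilon> / (2 * sqrt K))"
  have d0: "\<delta> > 0" using e K0 by (simp add: \<delta>_def)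
  have d1: "\<delta> \<le> 1" by (simp add: \<delta>_def)
  have dK: "\<delta>\<^sup>2 * K \<le> \<epsilon>\<^sup>2 / 4"
  proof -
    have "\<delta> \<le> \<epsilon> / (2 * sqrt K)" by (simp add: \<delta>_def)
    then have "\<delta>\<^sup>2 \<le> (\<epsilon> / (2 * sqrt K))\<^sup>2" using d0 by (intro power_mono) auto
    also have "\<dots> = \<epsilon>\<^sup>2 / (4 * K)" using K0 by (simp add: power_divide power_mult_distrib)
    finally have "\<delta>\<^sup>2 \<le> \<epsilon>\<^sup>2 / (4 * K)" .
    then have "\<delta>\<^sup>2 * K \<le> \<epsilon>\<^sup>2 / (4 * K) * K" using K0 by (intro mult_right_mono) auto
    also have "\<dots> = \<epsilon>\<^sup>2 / 4" using K0 by simp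
    finally show ?thesis .
  qed
  show ?thesis
  proof (intro exI[of _ \<delta>] conjI allI impI d0)
    fix g \<psi> assume H: "L2_01 g \<and> schwartz \<psi> \<and> in_Z \<psi> \<and> L2_dist f g < \<delta> \<and> Z_dist \<phi> \<psi> < \<delta>"
    then have g: "L2_01 g" and q: "schwartz \<psi>" "in_Z \<psi>" and lt1: "L2_dist f g < \<delta>" and lt2: "Z_dist \<phi> \<psi> < \<delta>"
      by auto
    note Zq = Z_facts[OF q]
    define d1 where "d1 = L2_dist f g"
    define d2 where "d2 = Z_dist \<phi> \<psi>"
    have d1p: "d1 \<ge> 0" "d1 < \<delta>" using lt1 by (simp_all add: d1_def L2_dist_def)
    have d2p: "d2 \<ge> 0" "d2 < \<delta>" using lt2 by (simp_all add: d2_def Z_dist_def)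
    have sq1: "d1\<^sup>2 \<le> \<delta>\<^sup>2" "d2\<^sup>2 \<le> \<delta>\<^sup>2" using d1p d2p by (auto intro: power_mono)
    have dd1: "\<delta>\<^sup>2 \<le> 1" using d0 d1 by (simp add: power_le_one)
    define T where "T = (2 * Zf) * d1\<^sup>2 + (2 * d2\<^sup>2) * (2 * Nf + 2 * d1\<^sup>2)"
    have T0: "T \<ge> 0" using Zf0 Nf0 by (simp add: T_def)
    have TK: "T \<le> \<delta>\<^sup>2 * K"
    proof -
      have a: "(2 * Zf) * d1\<^sup>2 \<le> (2 * Zf) * \<delta>\<^sup>2" using Zf0 sq1 by (intro mult_left_mono) auto
      have "2 * Nf + 2 * d1\<^sup>2 \<le> 2 * Nf + 2" using sq1 dd1 by simp
      then have b: "(2 * d2\<^sup>2) * (2 * Nf + 2 * d1\<^sup>2) \<le> (2 * \<delta>\<^sup>2) * (2 * Nf + 2)"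
        using sq1 Nf0 by (intro mult_mono) auto
      show ?thesis using a b unfolding T_def K_def by (simp add: algebra_simps)
    qed
    have ep: "\<epsilon>\<^sup>2 > 0" using e by simp
    have Tlt: "T < \<epsilon>\<^sup>2" using TK dK ep by linarith
    have Ybd: "Y_sq (\<lambda>k \<xi>. S_coeffs f \<phi> k \<xi> - S_coeffs g \<psi> k \<xi>) \<le> ennreal T"
    proof -
      have "Y_sq (\<lambda>k \<xi>. S_coeffs f \<phi> k \<xi> - S_coeffs g \<psi> k \<xi>)
         \<le> (2 * Z_sq \<phi>) * (\<Sum>\<^sub>\<infinity>k\<in>UNIV. ennreal ((cmod (fourier_coeff f k - fourier_coeff g k))\<^sup>2))
           + (2 * ennreal (d2\<^sup>2)) * (\<Sum>\<^sub>\<infinity>k\<in>UNIV. ennreal ((cmod (fourier_coeff g k))\<^sup>2))"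
        using Ydiff_bound[OF Zp(1) Zp(2) Zq(1) Zq(2), of "fourier_coeff f" "fourier_coeff g"]
        unfolding S_coeffs_def Z_sq_def[symmetric] Z_dist_eq[OF p q] d2_def .
      also have "\<dots> \<le> (2 * ennreal Zf) * ennreal (d1\<^sup>2) + (2 * ennreal (d2\<^sup>2)) * ennreal (2 * Nf + 2 * d1\<^sup>2)"
      proof -
        have A: "2 * Z_sq \<phi> \<le> 2 * ennreal Zf" using Zp(3) by (simp add: Zf_def)
        have "(\<Sum>\<^sub>\<infinity>k\<in>UNIV. ennreal ((cmod (fourier_coeff f k - fourier_coeff g k))\<^sup>2))
            = (\<Sum>\<^sub>\<infinity>k\<in>UNIV. ennreal ((cmod (fourier_coeff (\<lambda>t. f t - g t) k))\<^sup>2))"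
          by (simp add: fc_diff[OF f g])
        also have "\<dots> \<le> ennreal (RR (\<lambda>t. f t - g t))" by (rule bessel[OF L2_diff[OF f g]])
        also have "\<dots> = ennreal (d1\<^sup>2)" by (simp add: L2_dist_RR[OF f g] d1_def)
        finally have B: "(\<Sum>\<^sub>\<infinity>k\<in>UNIV. ennreal ((cmod (fourier_coeff f k - fourier_coeff g k))\<^sup>2)) \<le> ennreal (d1\<^sup>2)" .
        have "(\<Sum>\<^sub>\<infinity>k\<in>UNIV. ennreal ((cmod (fourier_coeff g k))\<^sup>2)) \<le> ennreal (RR g)" by (rule bessel[OF g])
        also have "\<dots> \<le> ennreal (2 * Nf + 2 * d1\<^sup>2)"
          using RR_bound[OF f g] L2_dist_RR[OF f g] by (intro ennreal_leI) (simp add: Nf_def d1_def)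
        finally have C: "(\<Sum>\<^sub>\<infinity>k\<in>UNIV. ennreal ((cmod (fourier_coeff g k))\<^sup>2)) \<le> ennreal (2 * Nf + 2 * d1\<^sup>2)" .
        show ?thesis
          by (intro add_mono mult_mono A B C order_refl) auto
      qed
      also have "\<dots> = ennreal T"
      proof -
        have e1: "ennreal (2 * Zf * d1\<^sup>2) = 2 * ennreal Zf * ennreal (d1\<^sup>2)"
          using Zf0 by (simp add: ennreal_mult)
        have p2: "2 * Nf + 2 * d1\<^sup>2 \<ge> 0" using Nf0 by simp
        have e2: "ennreal (2 * d2\<^sup>2 * (2 * Nf + 2 * d1\<^sup>2)) = 2 * ennreal (d2\<^sup>2) * ennreal (2 * Nf + 2 * d1\<^sup>2)"
          using p2 by (simp only: ennreal_mult zero_le_power2 mult_nonneg_nonneg zero_le_numeral ennreal_numeral)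
        have "ennreal T = ennreal (2 * Zf * d1\<^sup>2) + ennreal (2 * d2\<^sup>2 * (2 * Nf + 2 * d1\<^sup>2))"
          unfolding T_def using Zf0 p2 by (intro ennreal_plus) auto
        then show ?thesis using e1 e2 by simp
      qed
      finally show ?thesis .
    qed
    have "enn2real (Y_sq (\<lambda>k \<xi>. S_coeffs f \<phi> k \<xi> - S_coeffs g \<psi> k \<xi>)) \<le> T"
      using Ybd T0 by (intro enn2real_leI)
    then have "Y_dist (S_coeffs f \<phi>) (S_coeffs g \<psi>) \<le> sqrt T"
      unfolding Y_dist_def by (intro real_sqrt_le_mono)
    also have "sqrt T < \<epsilon>" using Tlt T0 e by (metis real_less_lsqrt less_eq_real_def)
    finally show "Y_dist (S_coeffs f \<phi>) (S_coeffs g \<psi>) < \<epsilon>" .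
  qed
qed

theorem theorem4p1:
  shows "(\<forall>f \<phi>. L2_01 f \<and> schwartz \<phi> \<and> in_Z \<phi> \<longrightarrow> in_Y (S_coeffs f \<phi>)) \<and>
         (\<forall>f \<phi>. L2_01 f \<and> schwartz \<phi> \<and> in_Z \<phi> \<longrightarrow>
            (\<forall>\<epsilon>>0. \<exists>\<delta>>0. \<forall>g \<psi>. L2_01 g \<and> schwartz \<psi> \<and> in_Z \<psi> \<and>
                L2_dist f g < \<delta> \<and> Z_dist \<phi> \<psi> < \<delta> \<longrightarrow>
                Y_dist (S_coeffs f \<phi>) (S_coeffs g \<psi>) < \<epsilon>))"
  using part1 part2 by blast

end
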